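(* Let $\{\mathcal{N}(\mathbf{t}),\ \mathbf{t}\in\mathbb{R}^d_+\}$ be a multiparameter Poisson process with transition parameter $\boldsymbol{\Lambda}=(\lambda_1,\dots,\lambda_d)$, $\lambda_i>0$. Then for $\mathbf{0}\prec\mathbf{r}\preceq\mathbf{s}\preceq\mathbf{t}$ and $m\ge1$, $$\mathbb{E}\{\mathcal{N}(\mathbf{r})\mathcal{N}(\mathbf{s})\mid\mathcal{N}(\mathbf{t})=m\}=\frac{m\,\boldsymbol{\Lambda}\cdot\mathbf{r}}{\boldsymbol{\Lambda}\cdot\mathbf{t}}+m(m-1)\frac{(\boldsymbol{\Lambda}\cdot\mathbf{r})(\boldsymbol{\Lambda}\cdot\mathbf{s})}{(\boldsymbol{\Lambda}\cdot\mathbf{t})^2}.$$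
   Context: On $\mathbb{R}^d_+$ use the componentwise partial order $\preceq$, with $\prec$ the strict relation; $\boldsymbol{\Lambda}\cdot\mathbf{t}=\sum_i\lambda_it_i$. A multiparameter Poisson process with transition parameter $\boldsymbol{\Lambda}$ is a nonnegative-integer-valued random field on $\mathbb{R}^d_+$ with $\mathcal{N}(\mathbf{0})=0$, nondecreasing in $\preceq$, with independent increments along chains $\mathbf{0}=\mathbf{t}^{(0)}\prec\dots\prec\mathbf{t}^{(m)}$, stationary increments ($\mathcal{N}(\mathbf{t})-\mathcal{N}(\mathbf{s})\overset{d}{=}\mathcal{N}(\mathbf{t}-\mathbf{s})$ for $\mathbf{s}\preceq\mathbf{t}$), and $\mathcal{N}(\mathbf{t})\sim$ Poisson$(\boldsymbol{\Lambda}\cdot\mathbf{t})$. *)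

theory Defs
  imports "HOL-Probability.Probability"
begin

text \<open>Points of R^d are vectors of type real^'d ('d a finite index type, d = CARD('d)).
  Componentwise partial order and its strict version (preceq and not equal).\<close>

definition vpreceq :: "real^'d \<Rightarrow> real^'d \<Rightarrow> bool" (infix "\<preceq>\<^sub>v" 50) where
  "x \<preceq>\<^sub>v y \<longleftrightarrow> (\<forall>i. x $ i \<le> y $ i)"

definition vprec :: "real^'d \<Rightarrow> real^'d \<Rightarrow> bool" (infix "\<prec>\<^sub>v" 50) where
  "x \<prec>\<^sub>v y \<longleftrightarrow> x \<preceq>\<^sub>v y \<and> x \<noteq> y"

text \<open>Multiparameter Poisson process on R^d_+ (only points t with 0 preceq t matter)
  with transition parameter Lam; Lam \<bullet> t = sum_i lambda_i t_i.\<close>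

definition multiparam_poisson ::
  "'a measure \<Rightarrow> (real^'d \<Rightarrow> 'a \<Rightarrow> nat) \<Rightarrow> real^'d \<Rightarrow> bool" where
  "multiparam_poisson M N Lam \<longleftrightarrow>
     prob_space M \<and>
     (\<forall>t. 0 \<preceq>\<^sub>v t \<longrightarrow> N t \<in> measurable M (count_space UNIV)) \<and>
     (\<forall>\<omega>\<in>space M. N 0 \<omega> = 0) \<and>
     (\<forall>s t. 0 \<preceq>\<^sub>v s \<longrightarrow> s \<preceq>\<^sub>v t \<longrightarrow> (\<forall>\<omega>\<in>space M. N s \<omega> \<le> N t \<omega>)) \<and>
     (\<forall>(ts :: nat \<Rightarrow> real^'d) n. ts 0 = 0 \<longrightarrow> (\<forall>k<n. ts k \<prec>\<^sub>v ts (Suc k)) \<longrightarrow>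
        prob_space.indep_vars M (\<lambda>_. count_space UNIV)
          (\<lambda>k \<omega>. N (ts k) \<omega> - N (ts (k - 1)) \<omega>) {1..n}) \<and>
     (\<forall>s t. 0 \<preceq>\<^sub>v s \<longrightarrow> s \<preceq>\<^sub>v t \<longrightarrow>
        distr M (count_space UNIV) (\<lambda>\<omega>. N t \<omega> - N s \<omega>) =
        distr M (count_space UNIV) (N (t - s))) \<and>
     (\<forall>t. 0 \<preceq>\<^sub>v t \<longrightarrow> (\<forall>k::nat.
        measure M {\<omega>\<in>space M. N t \<omega> = k} =
          exp (- (Lam \<bullet> t)) * (Lam \<bullet> t) ^ k / fact k))"

definition cond_exp_event :: "'a measure \<Rightarrow> ('a \<Rightarrow> real) \<Rightarrow> 'a set \<Rightarrow> real" where
  "cond_exp_event M X A = (\<integral>\<omega>. indicator A \<omega> * X \<omega> \<partial>M) / measure M A"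

end

theory Submission
  imports Defs
begin

definition pois :: "real \<Rightarrow> nat \<Rightarrow> real" where
  "pois x k = exp (- x) * x ^ k / fact k"

lemma pois_conv: "(\<Sum>i\<le>n. pois x i * pois y (n - i)) = pois (x + y) n"
proof -
  have "(\<Sum>i\<le>n. pois x i * pois y (n - i)) =
        (\<Sum>i\<le>n. exp (-(x+y)) / fact n * (of_nat (n choose i) * x ^ i * y ^ (n - i)))"
  proof (rule sum.cong[OF refl])
    fix i assume "i \<in> {..n}"
    then have "i \<le> n" by simp
    then have "real (n choose i) = fact n / (fact i * fact (n - i))"
      by (simp add: binomial_fact)
    then show "pois x i * pois y (n - i) = exp (-(x+y)) / fact n * (of_nat (n choose i) * x ^ i * y ^ (n - i))"
      by (simp add: pois_def exp_add[symmetric] field_simps exp_diff)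
  qed
  also have "\<dots> = exp (-(x+y)) / fact n * (x + y) ^ n"
    by (simp add: binomial_ring sum_distrib_left)
  finally show ?thesis by (simp add: pois_def)
qed

lemma pois_Suc: "real (Suc i) * pois x (Suc i) = x * pois x i"
proof -
  have f: "(fact (Suc i)::real) = real (Suc i) * fact i" by (rule fact_Suc)
  have "real (Suc i) \<noteq> 0" by simp
  then show ?thesis unfolding pois_def f by (simp add: field_simps del: of_nat_Suc)
qed

lemma pois_mean: "(\<Sum>i\<le>n. real i * pois x i * pois y (n - i)) = (if n = 0 then 0 else x * pois (x + y) (n - 1))"
proof (cases n)
  case 0 then show ?thesis by simp
next
  case (Suc p)
  have "(\<Sum>i\<le>Suc p. real i * pois x i * pois y (Suc p - i)) =
        (\<Sum>i\<le>p. real (Suc i) * pois x (Suc i) * pois y (p - i))"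
    by (subst sum.atMost_Suc_shift) simp
  also have "\<dots> = (\<Sum>i\<le>p. x * (pois x i * pois y (p - i)))"
    by (intro sum.cong refl) (metis pois_Suc mult.assoc)
  also have "\<dots> = x * (\<Sum>i\<le>p. pois x i * pois y (p - i))"
    by (simp add: sum_distrib_left)
  finally show ?thesis using Suc by (simp add: pois_conv)
qed

lemma comb:
  assumes "m \<ge> 1"
  shows "(\<Sum>n\<le>m. \<Sum>i\<le>n. real i * real n * (pois a i * pois b (n - i) * pois c (m - n)))
    = a * (pois (a + b + c) (m - 1) + (if m - 1 = 0 then 0 else (a + b) * pois (a + b + c) (m - 2)))"
proof -
  obtain q where q: "m = Suc q" using assms by (cases m) auto
  have "(\<Sum>n\<le>m. \<Sum>i\<le>n. real i * real n * (pois a i * pois b (n - i) * pois c (m - n)))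
      = (\<Sum>n\<le>m. real n * pois c (m - n) * (\<Sum>i\<le>n. real i * pois a i * pois b (n - i)))"
    by (simp add: sum_distrib_left mult_ac)
  also have "\<dots> = (\<Sum>n\<le>m. real n * pois c (m - n) * (if n = 0 then 0 else a * pois (a + b) (n - 1)))"
    by (simp add: pois_mean)
  also have "\<dots> = (\<Sum>p\<le>q. real (Suc p) * pois c (q - p) * (a * pois (a + b) p))"
    unfolding q by (subst sum.atMost_Suc_shift) simp
  also have "\<dots> = a * ((\<Sum>p\<le>q. real p * pois (a + b) p * pois c (q - p)) + (\<Sum>p\<le>q. pois (a + b) p * pois c (q - p)))"
    by (simp add: sum_distrib_left sum.distrib[symmetric] algebra_simps)
  also have "\<dots> = a * ((if q = 0 then 0 else (a + b) * pois (a + b + c) (q - 1)) + pois (a + b + c) q)"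
    by (simp add: pois_mean pois_conv)
  also have "\<dots> = a * (pois (a + b + c) (m - 1) + (if m - 1 = 0 then 0 else (a + b) * pois (a + b + c) (m - 2)))"
    using q by (simp add: algebra_simps)
  finally show ?thesis .
qed


lemma mp_facts:
  assumes "multiparam_poisson M N Lam"
  shows "prob_space M"
    and "\<And>t. 0 \<preceq>\<^sub>v t \<Longrightarrow> N t \<in> measurable M (count_space UNIV)"
    and "\<And>\<omega>. \<omega> \<in> space M \<Longrightarrow> N 0 \<omega> = 0"
    and "\<And>s t \<omega>. 0 \<preceq>\<^sub>v s \<Longrightarrow> s \<preceq>\<^sub>v t \<Longrightarrow> \<omega> \<in> space M \<Longrightarrow> N s \<omega> \<le> N t \<omega>"
    and "\<And>(ts :: nat \<Rightarrow> real^'d) n. ts 0 = 0 \<Longrightarrow> (\<forall>k<n. ts k \<prec>\<^sub>v ts (Suc k)) \<Longrightarrow>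
        prob_space.indep_vars M (\<lambda>_. count_space UNIV)
          (\<lambda>k \<omega>. N (ts k) \<omega> - N (ts (k - 1)) \<omega>) {1..n}"
    and "\<And>s t. 0 \<preceq>\<^sub>v s \<Longrightarrow> s \<preceq>\<^sub>v t \<Longrightarrow>
        distr M (count_space UNIV) (\<lambda>\<omega>. N t \<omega> - N s \<omega>) =
        distr M (count_space UNIV) (N (t - s))"
    and "\<And>t k. 0 \<preceq>\<^sub>v t \<Longrightarrow> measure M {\<omega>\<in>space M. N t \<omega> = k} = pois (Lam \<bullet> t) k"
  using assms unfolding multiparam_poisson_def pois_def by blast+

lemma vpreceq_trans: "x \<preceq>\<^sub>v y \<Longrightarrow> y \<preceq>\<^sub>v z \<Longrightarrow> x \<preceq>\<^sub>v z"
  unfolding vpreceq_def by (meson order_trans)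

lemma vpreceq_refl: "x \<preceq>\<^sub>v x"
  unfolding vpreceq_def by simp

lemma vpreceq_diff: "s \<preceq>\<^sub>v t \<Longrightarrow> 0 \<preceq>\<^sub>v t - s"
  unfolding vpreceq_def by simp

lemma incr_meas:
  assumes mp: "multiparam_poisson M N Lam" and s: "0 \<preceq>\<^sub>v s" and st: "s \<preceq>\<^sub>v t"
  shows "measure M ((\<lambda>\<omega>. N t \<omega> - N s \<omega>) -` {k} \<inter> space M) = pois (Lam \<bullet> (t - s)) k"
proof -
  have t: "0 \<preceq>\<^sub>v t" using s st by (rule vpreceq_trans)
  have mt: "N t \<in> measurable M (count_space UNIV)" and ms: "N s \<in> measurable M (count_space UNIV)"
    and mts: "N (t - s) \<in> measurable M (count_space UNIV)"
    using mp_facts(2)[OF mp] s t vpreceq_diff[OF st] by auto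
  have md: "(\<lambda>\<omega>. N t \<omega> - N s \<omega>) \<in> measurable M (count_space UNIV)"
    using mt ms by measurable
  have "measure M ((\<lambda>\<omega>. N t \<omega> - N s \<omega>) -` {k} \<inter> space M)
      = measure (distr M (count_space UNIV) (\<lambda>\<omega>. N t \<omega> - N s \<omega>)) {k}"
    using md by (simp add: measure_distr)
  also have "\<dots> = measure (distr M (count_space UNIV) (N (t - s))) {k}"
    using mp_facts(6)[OF mp s st] by simp
  also have "\<dots> = measure M (N (t - s) -` {k} \<inter> space M)"
    using mts by (simp add: measure_distr)
  also have "N (t - s) -` {k} \<inter> space M = {\<omega>\<in>space M. N (t - s) \<omega> = k}" by auto
  also have "measure M \<dots> = pois (Lam \<bullet> (t - s)) k"
    using mp_facts(7)[OF mp vpreceq_diff[OF st]] by simp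
  finally show ?thesis .
qed

lemma chain_nonneg:
  assumes "ts 0 = 0" "\<forall>k<n. ts k \<prec>\<^sub>v ts (Suc k)"
  shows "k \<le> n \<Longrightarrow> 0 \<preceq>\<^sub>v ts k"
proof (induction k)
  case 0 then show ?case using assms by (simp add: vpreceq_refl)
next
  case (Suc k)
  then show ?case using assms(2) unfolding vprec_def by (meson Suc_le_lessD less_imp_le_nat vpreceq_trans)
qed

lemma chain_prob:
  assumes mp: "multiparam_poisson M N Lam" and ts0: "ts 0 = 0"
    and ch: "\<forall>k<n. ts k \<prec>\<^sub>v ts (Suc k)" and n: "n \<ge> 1"
  shows "measure M (\<Inter>k\<in>{1..n}. (\<lambda>\<omega>. N (ts k) \<omega> - N (ts (k - 1)) \<omega>) -` {x k} \<inter> space M)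
       = (\<Prod>k\<in>{1..n}. pois (Lam \<bullet> (ts k - ts (k - 1))) (x k))"
proof -
  interpret prob_space M using mp_facts(1)[OF mp] .
  have "measure M (\<Inter>k\<in>{1..n}. (\<lambda>\<omega>. N (ts k) \<omega> - N (ts (k - 1)) \<omega>) -` {x k} \<inter> space M)
     = (\<Prod>k\<in>{1..n}. measure M ((\<lambda>\<omega>. N (ts k) \<omega> - N (ts (k - 1)) \<omega>) -` {x k} \<inter> space M))"
    using indep_varsD_finite[OF mp_facts(5)[OF mp ts0 ch], of "\<lambda>k. {x k}"] n by simp
  also have "\<dots> = (\<Prod>k\<in>{1..n}. pois (Lam \<bullet> (ts k - ts (k - 1))) (x k))"
  proof (rule prod.cong[OF refl])
    fix k assume k: "k \<in> {1..n}"
    have "k - 1 \<le> n" using k by (simp only: atLeastAtMost_iff) linarith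
    then have a: "0 \<preceq>\<^sub>v ts (k - 1)" using chain_nonneg[OF ts0 ch, of "k - 1"] by simp
    have b: "ts (k - 1) \<preceq>\<^sub>v ts k" using ch k unfolding vprec_def
      by (metis Suc_diff_1 Suc_le_eq atLeastAtMost_iff diff_less less_le_trans zero_less_one)
    show "measure M ((\<lambda>\<omega>. N (ts k) \<omega> - N (ts (k - 1)) \<omega>) -` {x k} \<inter> space M) = pois (Lam \<bullet> (ts k - ts (k - 1))) (x k)"
      by (rule incr_meas[OF mp a b])
  qed
  finally show ?thesis .
qed


lemma event_prob:
  assumes mp: "multiparam_poisson M N Lam" and r0: "0 \<prec>\<^sub>v r" and rs: "r \<preceq>\<^sub>v s" and st: "s \<preceq>\<^sub>v t"
    and "i \<le> n" "n \<le> m"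
  shows "measure M {\<omega>\<in>space M. N r \<omega> = i \<and> N s \<omega> = n \<and> N t \<omega> = m}
    = pois (Lam \<bullet> r) i * pois (Lam \<bullet> (s - r)) (n - i) * pois (Lam \<bullet> (t - s)) (m - n)"
proof -
  have r: "0 \<preceq>\<^sub>v r" using r0 unfolding vprec_def by simp
  have s: "0 \<preceq>\<^sub>v s" using r rs by (rule vpreceq_trans)
  have mono: "N r \<omega> \<le> N s \<omega> \<and> N s \<omega> \<le> N t \<omega> \<and> N 0 \<omega> = 0" if "\<omega> \<in> space M" for \<omega>
    using mp_facts(3,4)[OF mp] r s rs st that by blast
  have p0: "pois 0 k = (if k = 0 then 1 else 0)" for k by (simp add: pois_def)
  have n3: "{1..3::nat} = {1,2,3}" and n2: "{1..2::nat} = {1,2}" by auto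
  show ?thesis
  proof (cases "r = s")
    case True
    note rs' = True
    show ?thesis
    proof (cases "s = t")
      case True
      define ts :: "nat \<Rightarrow> real^'b" where "ts = (\<lambda>k. if k = 0 then 0 else r)"
      have ch: "\<forall>k<1. ts k \<prec>\<^sub>v ts (Suc k)" using r0 by (simp add: ts_def)
      have P: "measure M (\<Inter>k\<in>{1..1}. (\<lambda>\<omega>. N (ts k) \<omega> - N (ts (k - 1)) \<omega>) -` {i} \<inter> space M)
          = (\<Prod>k\<in>{1..1}. pois (Lam \<bullet> (ts k - ts (k - 1))) i)"
        by (rule chain_prob[OF mp _ ch]) (auto simp: ts_def)
      show ?thesis
      proof (cases "i = n \<and> n = m")
        case True
        have "{\<omega>\<in>space M. N r \<omega> = i \<and> N s \<omega> = n \<and> N t \<omega> = m}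
          = (\<Inter>k\<in>{1..1}. (\<lambda>\<omega>. N (ts k) \<omega> - N (ts (k - 1)) \<omega>) -` {i} \<inter> space M)"
          using True rs' \<open>s = t\<close> mono by (auto simp: ts_def)
        then show ?thesis using P True rs' \<open>s = t\<close> by (simp add: ts_def p0)
      next
        case False
        then have E: "{\<omega>\<in>space M. N r \<omega> = i \<and> N s \<omega> = n \<and> N t \<omega> = m} = {}"
          using rs' \<open>s = t\<close> by auto
        have "pois (Lam \<bullet> (s - r)) (n - i) * pois (Lam \<bullet> (t - s)) (m - n) = 0"
          using False rs' \<open>s = t\<close> \<open>i \<le> n\<close> \<open>n \<le> m\<close> by (auto simp: p0)
        then show ?thesis unfolding E by (simp add: mult.assoc)
      qed
    next
      case False
      define ts :: "nat \<Rightarrow> real^'b" where "ts = (\<lambda>k. if k = 0 then 0 else if k = 1 then r else t)"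
      have ch: "\<forall>k<2. ts k \<prec>\<^sub>v ts (Suc k)" using r0 rs' st False
        by (auto simp: ts_def vprec_def less_2_cases_iff)
      have P: "measure M (\<Inter>k\<in>{1..2}. (\<lambda>\<omega>. N (ts k) \<omega> - N (ts (k - 1)) \<omega>) -` {(if k = 1 then i else m - n)} \<inter> space M)
          = (\<Prod>k\<in>{1..2}. pois (Lam \<bullet> (ts k - ts (k - 1))) (if k = 1 then i else m - n))"
        by (rule chain_prob[OF mp _ ch]) (auto simp: ts_def)
      show ?thesis
      proof (cases "i = n")
        case True
        have "{\<omega>\<in>space M. N r \<omega> = i \<and> N s \<omega> = n \<and> N t \<omega> = m}
          = (\<Inter>k\<in>{1..2}. (\<lambda>\<omega>. N (ts k) \<omega> - N (ts (k - 1)) \<omega>) -` {(if k = 1 then i else m - n)} \<inter> space M)"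
          unfolding n2 using True rs' \<open>n \<le> m\<close> by (auto simp: ts_def dest: mono)
        then show ?thesis using P True rs' unfolding n2 by (simp add: ts_def p0)
      next
        case False
        then have E: "{\<omega>\<in>space M. N r \<omega> = i \<and> N s \<omega> = n \<and> N t \<omega> = m} = {}"
          using rs' by auto
        have "pois (Lam \<bullet> (s - r)) (n - i) = 0"
          using False rs' \<open>i \<le> n\<close> by (auto simp: p0)
        then show ?thesis unfolding E by simp
      qed
    qed
  next
    case False
    note rs' = False
    show ?thesis
    proof (cases "s = t")
      case True
      define ts :: "nat \<Rightarrow> real^'b" where "ts = (\<lambda>k. if k = 0 then 0 else if k = 1 then r else s)"
      have ch: "\<forall>k<2. ts k \<prec>\<^sub>v ts (Suc k)" using r0 rs' rs
        by (auto simp: ts_def vprec_def less_2_cases_iff)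
      have P: "measure M (\<Inter>k\<in>{1..2}. (\<lambda>\<omega>. N (ts k) \<omega> - N (ts (k - 1)) \<omega>) -` {(if k = 1 then i else n - i)} \<inter> space M)
          = (\<Prod>k\<in>{1..2}. pois (Lam \<bullet> (ts k - ts (k - 1))) (if k = 1 then i else n - i))"
        by (rule chain_prob[OF mp _ ch]) (auto simp: ts_def)
      show ?thesis
      proof (cases "n = m")
        case True
        have "{\<omega>\<in>space M. N r \<omega> = i \<and> N s \<omega> = n \<and> N t \<omega> = m}
          = (\<Inter>k\<in>{1..2}. (\<lambda>\<omega>. N (ts k) \<omega> - N (ts (k - 1)) \<omega>) -` {(if k = 1 then i else n - i)} \<inter> space M)"
          unfolding n2 using True \<open>s = t\<close> \<open>i \<le> n\<close> by (auto simp: ts_def dest: mono)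
        then show ?thesis using P True \<open>s = t\<close> unfolding n2 by (simp add: ts_def p0)
      next
        case False
        then have E: "{\<omega>\<in>space M. N r \<omega> = i \<and> N s \<omega> = n \<and> N t \<omega> = m} = {}"
          using \<open>s = t\<close> by auto
        have "pois (Lam \<bullet> (t - s)) (m - n) = 0"
          using False \<open>s = t\<close> \<open>n \<le> m\<close> by (auto simp: p0)
        then show ?thesis unfolding E by simp
      qed
    next
      case False
      define ts :: "nat \<Rightarrow> real^'b" where "ts = (\<lambda>k. if k = 0 then 0 else if k = 1 then r else if k = 2 then s else t)"
      define x where "x = (\<lambda>k::nat. if k = 1 then i else if k = 2 then n - i else m - n)"
      have ch: "\<forall>k<3. ts k \<prec>\<^sub>v ts (Suc k)" using r0 rs' rs st False
        by (auto simp: ts_def vprec_def less_Suc_eq numeral_3_eq_3)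
      have P: "measure M (\<Inter>k\<in>{1..3}. (\<lambda>\<omega>. N (ts k) \<omega> - N (ts (k - 1)) \<omega>) -` {x k} \<inter> space M)
          = (\<Prod>k\<in>{1..3}. pois (Lam \<bullet> (ts k - ts (k - 1))) (x k))"
        by (rule chain_prob[OF mp _ ch]) (auto simp: ts_def)
      have "{\<omega>\<in>space M. N r \<omega> = i \<and> N s \<omega> = n \<and> N t \<omega> = m}
          = (\<Inter>k\<in>{1..3}. (\<lambda>\<omega>. N (ts k) \<omega> - N (ts (k - 1)) \<omega>) -` {x k} \<inter> space M)"
        unfolding n3 using \<open>i \<le> n\<close> \<open>n \<le> m\<close> by (auto simp: ts_def x_def dest: mono)
      then show ?thesis using P unfolding n3 by (simp add: ts_def x_def)
    qed
  qed
qed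


theorem mainTheorem3:
  fixes M :: "'a measure" and N :: "real^'d \<Rightarrow> 'a \<Rightarrow> nat"
    and Lam r s t :: "real^'d" and m :: nat
  assumes "multiparam_poisson M N Lam"
    and "\<forall>i. Lam $ i > 0"
    and "0 \<prec>\<^sub>v r" and "r \<preceq>\<^sub>v s" and "s \<preceq>\<^sub>v t"
    and "m \<ge> 1"
  shows "cond_exp_event M (\<lambda>\<omega>. real (N r \<omega>) * real (N s \<omega>)) {\<omega>\<in>space M. N t \<omega> = m}
       = real m * (Lam \<bullet> r) / (Lam \<bullet> t)
         + real m * (real m - 1) * ((Lam \<bullet> r) * (Lam \<bullet> s)) / (Lam \<bullet> t)^2"
proof -
  note mp = assms(1)
  interpret prob_space M using mp_facts(1)[OF mp] .
  have r: "0 \<preceq>\<^sub>v r" using assms(3) unfolding vprec_def by simp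
  have s: "0 \<preceq>\<^sub>v s" using r assms(4) by (rule vpreceq_trans)
  have t: "0 \<preceq>\<^sub>v t" using s assms(5) by (rule vpreceq_trans)
  have mr[measurable]: "N r \<in> measurable M (count_space UNIV)"
    and ms[measurable]: "N s \<in> measurable M (count_space UNIV)"
    and mt[measurable]: "N t \<in> measurable M (count_space UNIV)"
    using mp_facts(2)[OF mp] r s t by auto
  have mono: "N r \<omega> \<le> N s \<omega> \<and> N s \<omega> \<le> N t \<omega>" if "\<omega> \<in> space M" for \<omega>
    using mp_facts(4)[OF mp] r s assms(4,5) that by blast
  define a where "a = Lam \<bullet> r"
  define b where "b = Lam \<bullet> (s - r)"
  define c where "c = Lam \<bullet> (t - s)"
  have Ls: "Lam \<bullet> s = a + b" by (simp add: a_def b_def inner_diff_right)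
  have Lt: "Lam \<bullet> t = a + b + c" by (simp add: a_def b_def c_def inner_diff_right)
  have nonneg: "0 \<le> Lam \<bullet> x" if "0 \<preceq>\<^sub>v x" for x
    using that assms(2) unfolding inner_vec_def vpreceq_def
    by (intro sum_nonneg) (simp add: less_imp_le)
  have apos: "0 < a"
  proof -
    obtain j where j: "r $ j \<noteq> 0" using assms(3) unfolding vprec_def by (metis vec_eq_iff zero_index)
    then have "0 < r $ j" using r unfolding vpreceq_def by (metis order_le_less zero_index)
    then show ?thesis unfolding a_def inner_vec_def using assms(2) r unfolding vpreceq_def
      by (intro sum_pos2[of UNIV j]) (auto intro: mult_nonneg_nonneg less_imp_le)
  qed
  have "0 \<le> b" unfolding b_def by (rule nonneg[OF vpreceq_diff[OF assms(4)]])
  moreover have "0 \<le> c" unfolding c_def by (rule nonneg[OF vpreceq_diff[OF assms(5)]])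
  ultimately have Tpos: "0 < a + b + c" using apos by simp
  define T where "T = a + b + c"
  define E where "E = {\<omega>\<in>space M. N t \<omega> = m}"
  define EV where "EV = (\<lambda>i n. {\<omega>\<in>space M. N r \<omega> = i \<and> N s \<omega> = n \<and> N t \<omega> = m})"
  have EVm: "EV i n \<in> sets M" for i n unfolding EV_def by measurable
  have PE: "measure M E = pois T m" unfolding E_def T_def using mp_facts(7)[OF mp t] Lt by simp
  have PEV: "measure M (EV i n) = pois a i * pois b (n - i) * pois c (m - n)" if "i \<le> n" "n \<le> m" for i n
    unfolding EV_def a_def b_def c_def by (rule event_prob[OF mp assms(3,4,5) that])
  have pw: "indicator E \<omega> * (real (N r \<omega>) * real (N s \<omega>))
     = (\<Sum>n\<le>m. \<Sum>i\<le>n. real i * real n * indicator (EV i n) \<omega>)" if w: "\<omega> \<in> space M" for \<omega>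
  proof -
    have inner: "(\<Sum>i\<le>n. real i * real n * indicator (EV i n) \<omega>)
        = (if n = N s \<omega> then indicator E \<omega> * real (N r \<omega>) * real n else 0)" for n
    proof -
      have "(\<Sum>i\<le>n. real i * real n * indicator (EV i n) \<omega>)
          = (\<Sum>i\<le>n. if i = N r \<omega> then (if n = N s \<omega> then indicator E \<omega> * real i * real n else 0) else 0)"
        by (intro sum.cong refl) (auto simp: EV_def E_def indicator_def w)
      also have "\<dots> = (if N r \<omega> \<le> n then (if n = N s \<omega> then indicator E \<omega> * real (N r \<omega>) * real n else 0) else 0)"
        by (subst sum.delta) auto
      also have "\<dots> = (if n = N s \<omega> then indicator E \<omega> * real (N r \<omega>) * real n else 0)"
        using mono[OF w] by auto
      finally show ?thesis .
    qed
    have "(\<Sum>n\<le>m. \<Sum>i\<le>n. real i * real n * indicator (EV i n) \<omega>)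
        = (\<Sum>n\<le>m. if n = N s \<omega> then indicator E \<omega> * real (N r \<omega>) * real n else 0)"
      by (simp add: inner)
    also have "\<dots> = (if N s \<omega> \<le> m then indicator E \<omega> * real (N r \<omega>) * real (N s \<omega>) else 0)"
      by (subst sum.delta) auto
    also have "\<dots> = indicator E \<omega> * (real (N r \<omega>) * real (N s \<omega>))"
      using mono[OF w] by (auto simp: E_def indicator_def)
    finally show ?thesis by simp
  qed
  have "(\<integral>\<omega>. indicator E \<omega> * (real (N r \<omega>) * real (N s \<omega>)) \<partial>M)
      = (\<integral>\<omega>. (\<Sum>n\<le>m. \<Sum>i\<le>n. real i * real n * indicator (EV i n) \<omega>) \<partial>M)"
    by (rule Bochner_Integration.integral_cong[OF refl pw])
  also have "\<dots> = (\<Sum>n\<le>m. \<Sum>i\<le>n. (\<integral>\<omega>. real i * real n * indicator (EV i n) \<omega> \<partial>M))"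
  proof -
    have hI: "integrable M (\<lambda>\<omega>. cc * indicator (EV i n) \<omega> :: real)" for cc i n
      using EVm[of i n] by (intro integrable_mult_right integrable_real_indicator) (auto simp: less_top[symmetric])
    show ?thesis
      apply (subst Bochner_Integration.integral_sum)
       apply (rule Bochner_Integration.integrable_sum, rule hI)
      apply (intro sum.cong refl)
      apply (subst Bochner_Integration.integral_sum)
       apply (rule hI)
      apply (rule refl)
      done
  qed
  also have "\<dots> = (\<Sum>n\<le>m. \<Sum>i\<le>n. real i * real n * measure M (EV i n))"
  proof -
    have hM: "(\<integral>\<omega>. cc * indicator (EV i n) \<omega> \<partial>M) = cc * measure M (EV i n)" for cc :: real and i n
      using EVm[of i n] by simp
    show ?thesis by (simp only: hM)
  qed
  also have "\<dots> = (\<Sum>n\<le>m. \<Sum>i\<le>n. real i * real n * (pois a i * pois b (n - i) * pois c (m - n)))"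
    by (intro sum.cong refl) (simp add: PEV)
  also have "\<dots> = a * (pois T (m - 1) + (if m - 1 = 0 then 0 else (a + b) * pois T (m - 2)))"
    unfolding T_def by (rule comb[OF assms(6)])
  finally have I: "(\<integral>\<omega>. indicator E \<omega> * (real (N r \<omega>) * real (N s \<omega>)) \<partial>M)
      = a * (pois T (m - 1) + (if m - 1 = 0 then 0 else (a + b) * pois T (m - 2)))" .
  have ppos: "0 < pois T k" for k unfolding pois_def using Tpos T_def by simp
  have rec: "real k * pois T k = T * pois T (k - 1)" if "k \<ge> 1" for k
    using pois_Suc[of "k - 1" T] that by simp
  have goal: "a * (pois T (m - 1) + (if m - 1 = 0 then 0 else (a + b) * pois T (m - 2))) / pois T m
      = real m * a / T + real m * (real m - 1) * (a * (a + b)) / T ^ 2"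
  proof (cases "m = 1")
    case True
    have p1: "pois T 1 = T * pois T 0" using rec[of 1] by simp
    have Tp: "0 < T" using Tpos T_def by simp
    have p0: "0 < pois T 0" by (rule ppos)
    have "a * (pois T (m - 1) + (if m - 1 = 0 then 0 else (a + b) * pois T (m - 2))) / pois T m
        = a * pois T 0 / (T * pois T 0)" using True p1 by simp
    also have "\<dots> = a / T" using p0 by simp
    finally show ?thesis using True by simp
  next
    case False
    then have m2: "m \<ge> 2" using assms(6) by simp
    have e1: "real m * pois T m = T * pois T (m - 1)" using rec[of m] assms(6) by simp
    have mm: "m - 1 - 1 = m - 2" by simp
    have "m - 1 \<ge> 1" using m2 by simp
    from rec[OF this] have e2: "real (m - 1) * pois T (m - 1) = T * pois T (m - 2)" unfolding mm .
    have rm: "real (m - 1) = real m - 1" using assms(6) by simp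
    define P where "P = pois T (m - 2)"
    have Pp: "0 < P" unfolding P_def by (rule ppos)
    have m1: "real m - 1 > 0" using m2 by simp
    have q1: "pois T (m - 1) = T * P / (real m - 1)" using e2 m1 unfolding rm P_def by (simp add: field_simps)
    have q2: "pois T m = T * T * P / (real m * (real m - 1))" using e1 q1 m1 m2 by (simp add: field_simps)
    have Tp: "0 < T" using Tpos T_def by simp
    show ?thesis using False m1 m2 Pp Tp unfolding q1 q2 P_def[symmetric]
      by (simp add: field_simps power2_eq_square)
  qed
  show ?thesis
    unfolding cond_exp_event_def E_def[symmetric]
    using I PE goal by (simp add: Ls Lt a_def[symmetric] T_def[symmetric] mult.commute)
qed

end
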